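(* Let $\Gamma=(V,m,\tau)$ be a weak $W$-graph and let $A\subseteq\Delta$. Then the representation $\mathbb{C}V$, restricted to $W(A)$, contains a copy of the trivial representation of $W(A)$ if and only if $A\cap\tau(v)=\emptyset$ for some $v\in V$.
   Context: $W$ is a Weyl group with a fixed set $\Delta$ of simple roots; for a root $\alpha$, $s_\alpha$ is the reflection in the hyperplane orthogonal to $\alpha$. A weak $W$-graph is a triple $\Gamma=(V,m,\tau)$ where $V$ is a finite set, $m:V\times V\to\mathbb{C}$ is a map, and $\tau$ is a map from $V$ to the power set of $\Delta$, such that the linear maps $s_\alpha:\mathbb{C}V\to\mathbb{C}V$ ($\alpha\in\Delta$) given on basis vectors by $s_\alpha(v)=-v$ if $\alpha\in\tau(v)$ and $s_\alpha(v)=v-\sum_{u\in V,\ \alpha\in\tau(u)} m(u,v)u$ if $\alpha\notin\tau(v)$ define a representation of $W$ on $\mathbb{C}V$. For $A\subseteq\Delta$, $W(A)$ is the subgroup of $W$ generated by $\{s_\alpha:\alpha\in A\}$. *)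

theory Defs
  imports "HOL-Analysis.Analysis"
begin

definition refl :: "'a::euclidean_space \<Rightarrow> 'a \<Rightarrow> 'a" where
  "refl \<alpha> x = x - (2 * (x \<bullet> \<alpha>) / (\<alpha> \<bullet> \<alpha>)) *\<^sub>R \<alpha>"

text \<open>Crystallographic, reduced root system (in the subspace it spans).\<close>
definition root_system :: "'a::euclidean_space set \<Rightarrow> bool" where
  "root_system \<Phi> \<longleftrightarrow> finite \<Phi> \<and> 0 \<notin> \<Phi>
     \<and> (\<forall>\<alpha>\<in>\<Phi>. refl \<alpha> ` \<Phi> = \<Phi>)
     \<and> (\<forall>\<alpha>\<in>\<Phi>. \<forall>\<beta>\<in>\<Phi>. 2 * (\<beta> \<bullet> \<alpha>) / (\<alpha> \<bullet> \<alpha>) \<in> \<int>)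
     \<and> (\<forall>\<alpha>\<in>\<Phi>. \<forall>c::real. c *\<^sub>R \<alpha> \<in> \<Phi> \<longrightarrow> c = 1 \<or> c = -1)"

definition simple_system :: "'a::euclidean_space set \<Rightarrow> 'a set \<Rightarrow> bool" where
  "simple_system \<Phi> \<Delta> \<longleftrightarrow> \<Delta> \<subseteq> \<Phi> \<and> independent \<Delta>
     \<and> (\<forall>\<beta>\<in>\<Phi>. \<exists>c::'a \<Rightarrow> real. \<beta> = (\<Sum>\<delta>\<in>\<Delta>. c \<delta> *\<^sub>R \<delta>)
            \<and> ((\<forall>\<delta>\<in>\<Delta>. c \<delta> \<ge> 0) \<or> (\<forall>\<delta>\<in>\<Delta>. c \<delta> \<le> 0)))"

text \<open>Group generated by the reflections in a set of vectors (reflections are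
  involutions, so the generated monoid is the generated group).\<close>
inductive_set refl_group :: "'a::euclidean_space set \<Rightarrow> ('a \<Rightarrow> 'a) set"
  for S :: "'a set" where
  id_in: "id \<in> refl_group S"
| step: "\<alpha> \<in> S \<Longrightarrow> w \<in> refl_group S \<Longrightarrow> refl \<alpha> \<circ> w \<in> refl_group S"

abbreviation weyl_group :: "'a::euclidean_space set \<Rightarrow> ('a \<Rightarrow> 'a) set" where
  "weyl_group \<Phi> \<equiv> refl_group \<Phi>"

abbreviation parabolic :: "'a::euclidean_space set \<Rightarrow> ('a \<Rightarrow> 'a) set" where
  "parabolic A \<equiv> refl_group A"

text \<open>The space CV: complex functions supported on V (basis vector v = indicator of v).\<close>
definition CV :: "'v set \<Rightarrow> ('v \<Rightarrow> complex) set" where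
  "CV V = {x. \<forall>u. u \<notin> V \<longrightarrow> x u = 0}"

text \<open>Coefficient of basis vector u in s_alpha(v).\<close>
definition wg_coeff :: "('v \<Rightarrow> 'v \<Rightarrow> complex) \<Rightarrow> ('v \<Rightarrow> 'a set) \<Rightarrow> 'a \<Rightarrow> 'v \<Rightarrow> 'v \<Rightarrow> complex" where
  "wg_coeff m \<tau> \<alpha> u v =
     (if \<alpha> \<in> \<tau> v then (if u = v then -1 else 0)
      else (if u = v then 1 else 0) - (if \<alpha> \<in> \<tau> u then m u v else 0))"

definition wg_op :: "'v set \<Rightarrow> ('v \<Rightarrow> 'v \<Rightarrow> complex) \<Rightarrow> ('v \<Rightarrow> 'a set) \<Rightarrow> 'a
                      \<Rightarrow> ('v \<Rightarrow> complex) \<Rightarrow> ('v \<Rightarrow> complex)" where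
  "wg_op V m \<tau> \<alpha> x = (\<lambda>u. if u \<in> V then (\<Sum>v\<in>V. wg_coeff m \<tau> \<alpha> u v * x v) else 0)"

definition W_graph_rep :: "'a::euclidean_space set \<Rightarrow> 'a set \<Rightarrow> 'v set \<Rightarrow> ('v \<Rightarrow> 'v \<Rightarrow> complex)
     \<Rightarrow> ('v \<Rightarrow> 'a set) \<Rightarrow> (('a \<Rightarrow> 'a) \<Rightarrow> ('v \<Rightarrow> complex) \<Rightarrow> ('v \<Rightarrow> complex)) \<Rightarrow> bool" where
  "W_graph_rep \<Phi> \<Delta> V m \<tau> \<rho> \<longleftrightarrow>
     (\<forall>w\<in>weyl_group \<Phi>. \<forall>x\<in>CV V. \<rho> w x \<in> CV V)
   \<and> (\<forall>w\<in>weyl_group \<Phi>. \<forall>x\<in>CV V. \<forall>y\<in>CV V. \<rho> w (\<lambda>u. x u + y u) = (\<lambda>u. \<rho> w x u + \<rho> w y u))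
   \<and> (\<forall>w\<in>weyl_group \<Phi>. \<forall>x\<in>CV V. \<forall>c. \<rho> w (\<lambda>u. c * x u) = (\<lambda>u. c * \<rho> w x u))
   \<and> (\<forall>x\<in>CV V. \<rho> id x = x)
   \<and> (\<forall>w1\<in>weyl_group \<Phi>. \<forall>w2\<in>weyl_group \<Phi>. \<forall>x\<in>CV V. \<rho> (w1 \<circ> w2) x = \<rho> w1 (\<rho> w2 x))
   \<and> (\<forall>\<alpha>\<in>\<Delta>. \<forall>x\<in>CV V. \<rho> (refl \<alpha>) x = wg_op V m \<tau> \<alpha> x)"

definition weak_W_graph :: "'a::euclidean_space set \<Rightarrow> 'a set \<Rightarrow> 'v set \<Rightarrow> ('v \<Rightarrow> 'v \<Rightarrow> complex)
     \<Rightarrow> ('v \<Rightarrow> 'a set) \<Rightarrow> bool" where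
  "weak_W_graph \<Phi> \<Delta> V m \<tau> \<longleftrightarrow> finite V \<and> (\<forall>v\<in>V. \<tau> v \<subseteq> \<Delta>)
     \<and> (\<exists>\<rho>. W_graph_rep \<Phi> \<Delta> V m \<tau> \<rho>)"

end

theory Submission
  imports Defs
begin


lemma refl_linear: "linear (refl a)"
  unfolding refl_def by (intro linearI) (auto simp: inner_add_left algebra_simps add_divide_distrib scaleR_add_left)

lemma refl_orth: "x \<bullet> a = 0 \<Longrightarrow> refl a x = x"
  unfolding refl_def by simp

lemma refl_invol: "a \<noteq> 0 \<Longrightarrow> refl a (refl a x) = x"
  unfolding refl_def by (simp add: inner_diff_left algebra_simps)

lemma refl_comp_self: "a \<noteq> 0 \<Longrightarrow> refl a \<circ> refl a = id"
  by (rule ext) (simp add: refl_invol)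

lemma rg_linear: "w \<in> refl_group S \<Longrightarrow> linear w"
  proof (induction rule: refl_group.induct)
  case id_in show ?case unfolding id_def by (rule linearI) auto
next
  case (step a w) show ?case using linear_compose[OF step.IH refl_linear] .
qed

lemma rg_orth: "w \<in> refl_group S \<Longrightarrow> (\<forall>a\<in>S. x \<bullet> a = 0) \<Longrightarrow> w x = x"
  by (induction rule: refl_group.induct) (auto simp: refl_orth)

lemma rg_mono: "w \<in> refl_group S \<Longrightarrow> S \<subseteq> T \<Longrightarrow> w \<in> refl_group T"
  by (induction rule: refl_group.induct) (auto intro: refl_group.intros)

lemma rg_perm: "w \<in> refl_group P \<Longrightarrow> root_system P \<Longrightarrow> w ` P \<subseteq> P"
proof (induction rule: refl_group.induct)
  case id_in then show ?case by simp
next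
  case (step a w)
  have "refl a ` P = P" using step unfolding root_system_def by blast
  then show ?case using step by (auto simp: image_comp[symmetric])
qed

lemma rg_agree:
  assumes "w1 \<in> refl_group S" "w2 \<in> refl_group S" "\<forall>x\<in>S. w1 x = w2 x"
  shows "w1 = w2"
proof
  fix x
  obtain y z where y: "y \<in> span S" and z: "\<And>w. w \<in> span S \<Longrightarrow> orthogonal z w" and xyz: "x = y + z"
    using orthogonal_subspace_decomp_exists by blast
  have l1: "linear w1" and l2: "linear w2" using assms rg_linear by auto
  have "w1 y = w2 y" using linear_eq_on_span[OF l1 l2, of S y] assms y by auto
  moreover have zo: "\<forall>a\<in>S. z \<bullet> a = 0" using z span_base unfolding orthogonal_def by blast
  have "w1 z = z" "w2 z = z" using rg_orth[OF assms(1) zo] rg_orth[OF assms(2) zo] by auto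
  ultimately show "w1 x = w2 x" using xyz linear_add[OF l1] linear_add[OF l2] by simp
qed

lemma rg_finite:
  assumes "root_system P"
  shows "finite (refl_group P)"
proof -
  have fP: "finite P" using assms unfolding root_system_def by blast
  have "inj_on (\<lambda>w. restrict w P) (refl_group P)"
  proof (rule inj_onI)
    fix w1 w2 assume "w1 \<in> refl_group P" "w2 \<in> refl_group P" "restrict w1 P = restrict w2 P"
    then have "\<forall>x\<in>P. w1 x = w2 x" by (metis restrict_apply')
    then show "w1 = w2" using rg_agree[of w1 P w2] \<open>w1 \<in> refl_group P\<close> \<open>w2 \<in> refl_group P\<close> by blast
  qed
  moreover have "(\<lambda>w. restrict w P) ` refl_group P \<subseteq> (\<Pi>\<^sub>E i\<in>P. P)"
  proof
    fix f assume "f \<in> (\<lambda>w. restrict w P) ` refl_group P"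
    then obtain w where w: "w \<in> refl_group P" and f: "f = restrict w P" by blast
    have "\<And>x. x \<in> P \<Longrightarrow> w x \<in> P" using rg_perm[OF w assms] by blast
    then show "f \<in> (\<Pi>\<^sub>E i\<in>P. P)" unfolding f by simp
  qed
  moreover have "finite (\<Pi>\<^sub>E i\<in>P. P)" by (rule finite_PiE) (use fP in auto)
  ultimately have "finite ((\<lambda>w. restrict w P) ` refl_group P)" by (rule_tac finite_subset) 
  then show ?thesis using finite_imageD \<open>inj_on _ _\<close> by blast
qed

lemma rg_comp: "g \<in> refl_group S \<Longrightarrow> w \<in> refl_group S \<Longrightarrow> g \<circ> w \<in> refl_group S"
  by (induction rule: refl_group.induct) (auto intro: refl_group.intros simp: comp_assoc)

lemma rg_inj: "g \<in> refl_group S \<Longrightarrow> 0 \<notin> S \<Longrightarrow> inj g"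
proof (induction rule: refl_group.induct)
  case id_in then show ?case by simp
next
  case (step a w)
  have "inj (refl a)" by (metis injI refl_invol step.hyps step.prems)
  then show ?case using step inj_compose by blast
qed



lemma CV_sum: "finite I \<Longrightarrow> (\<And>i. i \<in> I \<Longrightarrow> f i \<in> CV V) \<Longrightarrow> (\<lambda>u. \<Sum>i\<in>I. f i u) \<in> CV V"
  unfolding CV_def by auto

lemma rho_add: "W_graph_rep \<Phi> \<Delta> V m \<tau> \<rho> \<Longrightarrow> w \<in> refl_group \<Phi> \<Longrightarrow> x \<in> CV V \<Longrightarrow> y \<in> CV V
   \<Longrightarrow> \<rho> w (\<lambda>u. x u + y u) = (\<lambda>u. \<rho> w x u + \<rho> w y u)"
  unfolding W_graph_rep_def by blast

lemma rho_scal: "W_graph_rep \<Phi> \<Delta> V m \<tau> \<rho> \<Longrightarrow> w \<in> refl_group \<Phi> \<Longrightarrow> x \<in> CV V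
   \<Longrightarrow> \<rho> w (\<lambda>u. c * x u) = (\<lambda>u. c * \<rho> w x u)"
  unfolding W_graph_rep_def by blast

lemma rho_clos: "W_graph_rep \<Phi> \<Delta> V m \<tau> \<rho> \<Longrightarrow> w \<in> refl_group \<Phi> \<Longrightarrow> x \<in> CV V \<Longrightarrow> \<rho> w x \<in> CV V"
  unfolding W_graph_rep_def by blast

lemma rho_comp: "W_graph_rep \<Phi> \<Delta> V m \<tau> \<rho> \<Longrightarrow> w1 \<in> refl_group \<Phi> \<Longrightarrow> w2 \<in> refl_group \<Phi> \<Longrightarrow> x \<in> CV V
   \<Longrightarrow> \<rho> (w1 \<circ> w2) x = \<rho> w1 (\<rho> w2 x)"
  unfolding W_graph_rep_def by blast

lemma rho_gen: "W_graph_rep \<Phi> \<Delta> V m \<tau> \<rho> \<Longrightarrow> a \<in> \<Delta> \<Longrightarrow> x \<in> CV V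
   \<Longrightarrow> \<rho> (refl a) x = wg_op V m \<tau> a x"
  unfolding W_graph_rep_def by blast

lemma rho_id: "W_graph_rep \<Phi> \<Delta> V m \<tau> \<rho> \<Longrightarrow> x \<in> CV V \<Longrightarrow> \<rho> id x = x"
  unfolding W_graph_rep_def by blast

lemma rho_lin_sum:
  assumes R: "W_graph_rep \<Phi> \<Delta> V m \<tau> \<rho>" and w: "w \<in> refl_group \<Phi>"
  shows "finite I \<Longrightarrow> (\<And>i. i \<in> I \<Longrightarrow> f i \<in> CV V) \<Longrightarrow>
     \<rho> w (\<lambda>u. \<Sum>i\<in>I. c i * f i u) = (\<lambda>u. \<Sum>i\<in>I. c i * \<rho> w (f i) u)"
proof (induction I rule: finite_induct)
  case empty
  have z: "(\<lambda>u. 0::complex) \<in> CV V" unfolding CV_def by simp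
  have "\<forall>x\<in>CV V. \<forall>c. \<rho> w (\<lambda>u. c * x u) = (\<lambda>u. c * \<rho> w x u)"
    using R w unfolding W_graph_rep_def by blast
  then have "\<rho> w (\<lambda>u. 0 * (0::complex)) = (\<lambda>u. 0 * \<rho> w (\<lambda>u. 0) u)"
    using z by fastforce
  then show ?case by simp
next
  case (insert j I)
  have s1: "(\<lambda>u. c j * f j u) \<in> CV V" using insert.prems unfolding CV_def by auto
  have s2: "(\<lambda>u. \<Sum>i\<in>I. c i * f i u) \<in> CV V" using insert.prems unfolding CV_def by auto
  have "\<rho> w (\<lambda>u. \<Sum>i\<in>insert j I. c i * f i u) = \<rho> w (\<lambda>u. c j * f j u + (\<Sum>i\<in>I. c i * f i u))"
    using insert.hyps by simp
  also have "\<dots> = (\<lambda>u. \<rho> w (\<lambda>u. c j * f j u) u + \<rho> w (\<lambda>u. \<Sum>i\<in>I. c i * f i u) u)"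
    using rho_add[OF R w s1 s2] .
  also have "\<rho> w (\<lambda>u. c j * f j u) = (\<lambda>u. c j * \<rho> w (f j) u)"
    using rho_scal[OF R w, of "f j"] insert.prems by simp
  also have "\<rho> w (\<lambda>u. \<Sum>i\<in>I. c i * f i u) = (\<lambda>u. \<Sum>i\<in>I. c i * \<rho> w (f i) u)"
    using insert.IH insert.prems by blast
  finally show ?case using insert.hyps by (simp add: sum.insert[OF insert.hyps])
qed

theorem corollary2p7:
  fixes \<Phi> \<Delta> A :: "'a::euclidean_space set"
    and V :: "'v set" and m :: "'v \<Rightarrow> 'v \<Rightarrow> complex" and \<tau> :: "'v \<Rightarrow> 'a set"
    and \<rho> :: "('a \<Rightarrow> 'a) \<Rightarrow> ('v \<Rightarrow> complex) \<Rightarrow> ('v \<Rightarrow> complex)"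
  assumes "root_system \<Phi>" and "simple_system \<Phi> \<Delta>"
    and "weak_W_graph \<Phi> \<Delta> V m \<tau>"
    and "W_graph_rep \<Phi> \<Delta> V m \<tau> \<rho>"
    and "A \<subseteq> \<Delta>"
  shows "(\<exists>x\<in>CV V. (\<exists>u. x u \<noteq> 0) \<and> (\<forall>w\<in>parabolic A. \<rho> w x = x))
         \<longleftrightarrow> (\<exists>v\<in>V. A \<inter> \<tau> v = {})"
proof -
  note R = assms(4)
  define G where "G = parabolic A"
  have AP: "A \<subseteq> \<Phi>" using assms(2,5) unfolding simple_system_def by blast
  have A0: "0 \<notin> A" using AP assms(1) unfolding root_system_def by blast
  have fV: "finite V" using assms(3) unfolding weak_W_graph_def by blast
  have GW: "\<And>w. w \<in> G \<Longrightarrow> w \<in> refl_group \<Phi>" unfolding G_def using rg_mono[OF _ AP] by blast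
  have fG: "finite G" using rg_finite[OF assms(1)] GW by (meson finite_subset subsetI)
  have idG: "id \<in> G" unfolding G_def by (rule refl_group.id_in)
  have cG: "card G \<noteq> 0" using fG idG by auto
  have rA: "refl a \<in> G" if "a \<in> A" for a
  proof -
    have "refl a \<circ> id \<in> refl_group A" by (rule refl_group.step[OF that refl_group.id_in])
    then show ?thesis unfolding G_def by simp
  qed
  have clos: "\<And>x w. w \<in> G \<Longrightarrow> x \<in> CV V \<Longrightarrow> \<rho> w x \<in> CV V"
    using rho_clos[OF R GW] by blast
  have comp: "\<And>x w1 w2. w1 \<in> G \<Longrightarrow> w2 \<in> G \<Longrightarrow> x \<in> CV V \<Longrightarrow> \<rho> (w1 \<circ> w2) x = \<rho> w1 (\<rho> w2 x)"
    using rho_comp[OF R GW GW] by blast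
  have gen: "\<And>a x. a \<in> A \<Longrightarrow> x \<in> CV V \<Longrightarrow> \<rho> (refl a) x = wg_op V m \<tau> a x"
    using rho_gen[OF R] assms(5) by blast
  have rid: "\<And>x. x \<in> CV V \<Longrightarrow> \<rho> id x = x" using rho_id[OF R] by blast
  define e where "e = (\<lambda>(v::'v) u. if u = v then (1::complex) else 0)"
  have eCV: "\<And>v. v \<in> V \<Longrightarrow> e v \<in> CV V" unfolding e_def CV_def by auto
  define P where "P = (\<lambda>z u. \<Sum>w\<in>G. \<rho> w z u)"
  show ?thesis
  proof
    assume "\<exists>x\<in>CV V. (\<exists>u. x u \<noteq> 0) \<and> (\<forall>w\<in>parabolic A. \<rho> w x = x)"
    then obtain x u where x: "x \<in> CV V" "x u \<noteq> 0" and fx: "\<And>w. w \<in> G \<Longrightarrow> \<rho> w x = x"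
      unfolding G_def by blast
    show "\<exists>v\<in>V. A \<inter> \<tau> v = {}"
    proof (rule ccontr)
      assume "\<not> ?thesis"
      then have all: "\<And>v. v \<in> V \<Longrightarrow> \<exists>a\<in>A. a \<in> \<tau> v" by blast
      have Pe: "P (e v) u' = 0" if v: "v \<in> V" for v u'
      proof -
        obtain a where a: "a \<in> A" "a \<in> \<tau> v" using all v by blast
        have "wg_op V m \<tau> a (e v) = (\<lambda>u. - e v u)"
        proof
          fix u
          show "wg_op V m \<tau> a (e v) u = - e v u"
          proof (cases "u \<in> V")
            case True
            have "(\<Sum>v'\<in>V. wg_coeff m \<tau> a u v' * e v v') = wg_coeff m \<tau> a u v"
              unfolding e_def using v fV by (simp add: if_distrib cong: if_cong)
            then show ?thesis using True a unfolding wg_op_def wg_coeff_def e_def by simp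
          next
            case False
            then show ?thesis using v unfolding wg_op_def e_def by auto
          qed
        qed
        then have ra: "\<rho> (refl a) (e v) = (\<lambda>u. (-1) * e v u)" using gen[OF a(1) eCV[OF v]] by simp
        have bij: "(\<lambda>w. w \<circ> refl a) ` G = G"
        proof
          show "(\<lambda>w. w \<circ> refl a) ` G \<subseteq> G" using rg_comp rA[OF a(1)] unfolding G_def by blast
          show "G \<subseteq> (\<lambda>w. w \<circ> refl a) ` G"
          proof
            fix w assume w: "w \<in> G"
            have "w = (w \<circ> refl a) \<circ> refl a" using refl_comp_self[of a] a(1) A0
              by (metis comp_assoc comp_id)
            moreover have "w \<circ> refl a \<in> G" using rg_comp w rA[OF a(1)] unfolding G_def by blast
            ultimately show "w \<in> (\<lambda>w. w \<circ> refl a) ` G" by blast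
          qed
        qed
        have inj: "inj_on (\<lambda>w. w \<circ> refl a) G"
        proof (rule inj_onI)
          fix w1 w2 assume "w1 \<circ> refl a = w2 \<circ> refl a"
          then have "w1 \<circ> refl a \<circ> refl a = w2 \<circ> refl a \<circ> refl a" by simp
          then show "w1 = w2" using refl_comp_self[of a] a(1) A0 by (metis comp_assoc comp_id)
        qed
        have "P (e v) u' = (\<Sum>w\<in>(\<lambda>w. w \<circ> refl a) ` G. \<rho> w (e v) u')"
          unfolding P_def bij ..
        also have "\<dots> = (\<Sum>w\<in>G. \<rho> (w \<circ> refl a) (e v) u')"
          using sum.reindex[OF inj] by simp
        also have "\<dots> = (\<Sum>w\<in>G. \<rho> w (\<lambda>u. (-1) * e v u) u')"
          using comp rA[OF a(1)] eCV[OF v] ra by simp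
        also have "\<dots> = (\<Sum>w\<in>G. (-1) * \<rho> w (e v) u')"
        proof (rule sum.cong[OF refl])
          fix w assume "w \<in> G"
          then have "\<rho> w (\<lambda>u. (-1) * e v u) = (\<lambda>u. (-1) * \<rho> w (e v) u)"
            using rho_scal[OF R GW eCV[OF v]] by blast
          then show "\<rho> w (\<lambda>u. (-1) * e v u) u' = (-1) * \<rho> w (e v) u'" by simp
        qed
        also have "\<dots> = - P (e v) u'" unfolding P_def by (simp add: sum_negf)
        finally show ?thesis by simp
      qed
      have xdec: "x = (\<lambda>u. \<Sum>v\<in>V. x v * e v u)"
      proof
        fix u show "x u = (\<Sum>v\<in>V. x v * e v u)"
          using x(1) fV unfolding e_def CV_def by (cases "u \<in> V") (auto simp: if_distrib cong: if_cong)
      qed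
      have "P x u = (\<Sum>w\<in>G. \<Sum>v\<in>V. x v * \<rho> w (e v) u)"
        unfolding P_def
      proof (rule sum.cong[OF refl])
        fix w assume w: "w \<in> G"
        have "\<rho> w x = \<rho> w (\<lambda>u. \<Sum>v\<in>V. x v * e v u)" by (rule arg_cong[where f="\<rho> w"], rule xdec)
        also have "\<dots> = (\<lambda>u. \<Sum>v\<in>V. x v * \<rho> w (e v) u)" by (rule rho_lin_sum[OF R GW[OF w] fV eCV])
        finally show "\<rho> w x u = (\<Sum>v\<in>V. x v * \<rho> w (e v) u)" by simp
      qed
      also have "\<dots> = (\<Sum>v\<in>V. x v * P (e v) u)"
        unfolding P_def by (simp add: sum.swap[of _ G] sum_distrib_left)
      also have "\<dots> = 0" using Pe by simp
      finally have "P x u = 0" .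
      moreover have "P x u = of_nat (card G) * x u" unfolding P_def using fx by simp
      ultimately show False using cG x(2) by simp
    qed
  next
    assume "\<exists>v\<in>V. A \<inter> \<tau> v = {}"
    then obtain v0 where v0: "v0 \<in> V" "A \<inter> \<tau> v0 = {}" by blast
    have fix0: "\<rho> w z v0 = z v0" if "w \<in> G" "z \<in> CV V" for w z
      using that(1,2) unfolding G_def
    proof (induction arbitrary: z rule: refl_group.induct)
      case id_in then show ?case using rid[of z] by (simp add: id_def)
    next
      case (step a w)
      have wG: "w \<in> G" "refl a \<in> G" using step rA unfolding G_def by auto
      have cz: "\<rho> w z \<in> CV V" using clos wG step by blast
      have "\<rho> (refl a \<circ> w) z v0 = wg_op V m \<tau> a (\<rho> w z) v0"
        using comp[OF wG(2) wG(1) step.prems] gen[OF step.hyps(1) cz] by simp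
      also have "\<dots> = (\<Sum>v\<in>V. (if v = v0 then 1 else 0) * \<rho> w z v)"
        unfolding wg_op_def using v0 step.hyps(1)
        by (auto intro!: sum.cong simp: wg_coeff_def)
      also have "\<dots> = (\<Sum>v\<in>V. if v = v0 then \<rho> w z v else 0)"
        by (rule sum.cong) auto
      also have "\<dots> = \<rho> w z v0" using v0(1) fV by (simp add: sum.delta)
      also have "\<dots> = z v0" by (rule step.IH[OF step.prems])
      finally show ?case .
    qed
    define y where "y = P (e v0)"
    have yCV: "y \<in> CV V" unfolding y_def P_def by (rule CV_sum[OF fG]) (use clos eCV v0 in blast)
    have "y v0 = of_nat (card G)" unfolding y_def P_def using fix0 eCV[OF v0(1)] by (simp add: e_def)
    then have yn: "y v0 \<noteq> 0" using cG by simp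
    have yfix: "\<rho> g y = y" if g: "g \<in> G" for g
    proof -
      have inj: "inj_on ((\<circ>) g) G"
        using rg_inj[of g A] g A0 unfolding G_def by (auto intro!: inj_onI simp: fun_eq_iff inj_def)
      have sub: "((\<circ>) g) ` G \<subseteq> G" using rg_comp g unfolding G_def by blast
      have img: "((\<circ>) g) ` G = G"
        by (rule card_subset_eq[OF fG sub]) (simp add: card_image[OF inj])
      have "\<rho> g y = (\<lambda>u. \<Sum>w\<in>G. 1 * \<rho> g (\<rho> w (e v0)) u)"
        unfolding y_def P_def using rho_lin_sum[OF R GW[OF g], of G "\<lambda>w. \<rho> w (e v0)" "\<lambda>_. 1"] fG clos eCV v0
        by simp
      also have "\<dots> = (\<lambda>u. \<Sum>w\<in>G. \<rho> (g \<circ> w) (e v0) u)" using comp g eCV v0 by simp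
      also have "\<dots> = (\<lambda>u. \<Sum>w\<in>((\<circ>) g) ` G. \<rho> w (e v0) u)"
        by (rule ext, use sum.reindex[OF inj, of "\<lambda>w. \<rho> w (e v0) _"] in simp)
      also have "\<dots> = y" unfolding img y_def P_def ..
      finally show ?thesis .
    qed
    show "\<exists>x\<in>CV V. (\<exists>u. x u \<noteq> 0) \<and> (\<forall>w\<in>parabolic A. \<rho> w x = x)"
      using yCV yn yfix unfolding G_def by blast
  qed
qed

end
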